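(* For every finite nonempty $A\subseteq\mathbb{R}^n$ define $\delta(A)=\sqrt{\langle\langle \mathrm{conv}(A-A),\mathrm{conv}(A-A)\rangle\rangle_2}$, and set $\delta(\emptyset)=0$. Then $(\mathbb{R}^n,\delta)$ is a diversity.
   Context: $\langle\langle A,B\rangle\rangle_2=\int_{\mathbb{R}^n}h_A(x)h_B(x)\,d\phi(x)$ for convex bodies (closed, bounded, non-empty convex sets) $A,B\subseteq\mathbb{R}^n$, where $h_A(x)=\sup\{a\cdot x: a\in A\}$ is the support function and $\phi$ is the standard Gaussian probability measure on $\mathbb{R}^n$. $A-A=\{a_1-a_2: a_1,a_2\in A\}$ and $\mathrm{conv}$ denotes convex hull. A diversity $(X,\delta)$ is a set $X$ with a function $\delta$ on finite subsets of $X$ such that (D1) $\delta(A)\geq 0$, and $\delta(A)=0$ iff $|A|\leq 1$; (D2) for all finite $A,B,C\subseteq X$ with $B\neq\emptyset$, $\delta(A\cup B)+\delta(B\cup C)\geq\delta(A\cup C)$. *)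

theory Defs
  imports "HOL-Analysis.Analysis"
begin

definition std_gaussian :: "'a::euclidean_space measure" where
  "std_gaussian = density lborel
     (\<lambda>x. ennreal ((2 * pi) powr (- real DIM('a) / 2) * exp (- (norm x)\<^sup>2 / 2)))"

definition support_fun :: "'a::euclidean_space set \<Rightarrow> 'a \<Rightarrow> real" where
  "support_fun A x = Sup ((\<lambda>a. a \<bullet> x) ` A)"

definition gauss_ip :: "'a::euclidean_space set \<Rightarrow> 'a set \<Rightarrow> real" where
  "gauss_ip A B = (\<integral>x. support_fun A x * support_fun B x \<partial>std_gaussian)"

definition mdiff :: "'a::ab_group_add set \<Rightarrow> 'a set \<Rightarrow> 'a set" where
  "mdiff A B = {a - b | a b. a \<in> A \<and> b \<in> B}"

definition gauss_delta :: "'a::euclidean_space set \<Rightarrow> real" where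
  "gauss_delta A = (if A = {} then 0
     else sqrt (gauss_ip (convex hull (mdiff A A)) (convex hull (mdiff A A))))"

definition is_diversity :: "'a set \<Rightarrow> ('a set \<Rightarrow> real) \<Rightarrow> bool" where
  "is_diversity X \<delta> \<longleftrightarrow>
     (\<forall>A. finite A \<and> A \<subseteq> X \<longrightarrow> \<delta> A \<ge> 0 \<and> (\<delta> A = 0 \<longleftrightarrow> card A \<le> 1)) \<and>
     (\<forall>A B C. finite A \<and> finite B \<and> finite C \<and> A \<subseteq> X \<and> B \<subseteq> X \<and> C \<subseteq> X \<and> B \<noteq> {}
        \<longrightarrow> \<delta> (A \<union> B) + \<delta> (B \<union> C) \<ge> \<delta> (A \<union> C))"

end

theory Submission
  imports Defs "HOL-Probability.Probability"
begin

lemma mdiff_eq: "mdiff A A = (\<lambda>(a,b). a - b) ` (A \<times> A)"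
  unfolding mdiff_def by auto

lemma finite_mdiff: "finite A \<Longrightarrow> finite (mdiff A A)"
  unfolding mdiff_eq by auto

lemma mdiff_ne: "A \<noteq> {} \<Longrightarrow> mdiff A A \<noteq> {}"
  unfolding mdiff_eq by auto

lemma zero_in_mdiff: "A \<noteq> {} \<Longrightarrow> 0 \<in> mdiff A A"
  unfolding mdiff_def by force

lemma support_hull:
  fixes S :: "'a::euclidean_space set"
  assumes "finite S" "S \<noteq> {}"
  shows "support_fun (convex hull S) x = Max ((\<lambda>y. y \<bullet> x) ` S)"
proof -
  let ?M = "Max ((\<lambda>y. y \<bullet> x) ` S)"
  have le: "y \<bullet> x \<le> ?M" if "y \<in> S" for y using assms that by auto
  have "convex {y. y \<bullet> x \<le> ?M}" by (rule convex_halfspace_le[of x ?M, unfolded inner_commute[of x]])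
  then have sub: "convex hull S \<subseteq> {y. y \<bullet> x \<le> ?M}"
    by (intro hull_minimal) (use le in auto)
  have "?M \<in> (\<lambda>y. y \<bullet> x) ` S" using assms by (intro Max_in) auto
  then obtain y0 where y0: "y0 \<in> S" "y0 \<bullet> x = ?M" by auto
  have "y0 \<in> convex hull S" by (rule subsetD[OF hull_subset y0(1)])
  show ?thesis unfolding support_fun_def
  proof (rule cSup_eq_maximum)
    show "?M \<in> (\<lambda>a. a \<bullet> x) ` (convex hull S)"
      using y0 \<open>y0 \<in> convex hull S\<close> by (metis image_eqI)
    fix z assume "z \<in> (\<lambda>a. a \<bullet> x) ` (convex hull S)"
    then obtain y where "y \<in> convex hull S" "z = y \<bullet> x" by blast
    then show "z \<le> ?M" using sub by blast
  qed
qed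

definition W :: "'a::euclidean_space set \<Rightarrow> 'a \<Rightarrow> real" where
  "W A x = Max ((\<lambda>y. y \<bullet> x) ` mdiff A A)"

lemma gauss_delta_eq:
  assumes "finite A" "A \<noteq> {}"
  shows "gauss_delta A = sqrt (\<integral>x. (W A x)\<^sup>2 \<partial>std_gaussian)"
  using assms unfolding gauss_delta_def gauss_ip_def
  by (simp add: support_hull finite_mdiff mdiff_ne W_def power2_eq_square)

lemma W_ge:
  assumes "finite A" "a \<in> A" "b \<in> A"
  shows "(a - b) \<bullet> x \<le> W A x"
  unfolding W_def using assms finite_mdiff[OF assms(1)]
  by (intro Max_ge) (auto simp: mdiff_def)

lemma W_attained:
  assumes "finite A" "A \<noteq> {}"
  obtains a b where "a \<in> A" "b \<in> A" "W A x = (a - b) \<bullet> x"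
proof -
  have "W A x \<in> (\<lambda>y. y \<bullet> x) ` mdiff A A"
    unfolding W_def using assms finite_mdiff mdiff_ne by (intro Max_in) auto
  then show ?thesis using that unfolding mdiff_def by auto
qed

lemma W_nonneg:
  assumes "finite A" "A \<noteq> {}"
  shows "0 \<le> W A x"
proof -
  from assms obtain a where "a \<in> A" by auto
  then show ?thesis using W_ge[OF assms(1), of a a x] by auto
qed

lemma W_meas: "finite A \<Longrightarrow> W A \<in> borel_measurable borel"
  unfolding W_def[abs_def] by (intro borel_measurable_Max finite_mdiff) auto

lemma W_tri:
  assumes fA: "finite A" and fB: "finite B" and fC: "finite C" and "B \<noteq> {}" "A \<union> C \<noteq> {}"
  shows "W (A \<union> C) x \<le> W (A \<union> B) x + W (B \<union> C) x"
proof -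
  have fAC: "finite (A \<union> C)" and fAB: "finite (A \<union> B)" and fBC: "finite (B \<union> C)"
    using fA fB fC by simp_all
  obtain p q where pq: "p \<in> A \<union> C" "q \<in> A \<union> C" "W (A \<union> C) x = (p - q) \<bullet> x"
    using W_attained[OF fAC \<open>A \<union> C \<noteq> {}\<close>] by blast
  obtain b where b: "b \<in> B" using assms by blast
  have ne1: "A \<union> B \<noteq> {}" and ne2: "B \<union> C \<noteq> {}" using b by blast+
  have n1: "0 \<le> W (A \<union> B) x" by (rule W_nonneg[OF fAB ne1])
  have n2: "0 \<le> W (B \<union> C) x" by (rule W_nonneg[OF fBC ne2])
  have split: "(p - q) \<bullet> x = (p - b) \<bullet> x + (b - q) \<bullet> x" by (simp add: inner_diff_left)
  have bAB: "b \<in> A \<union> B" and bBC: "b \<in> B \<union> C" using b by blast+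
  have "(p - q) \<bullet> x \<le> W (A \<union> B) x + W (B \<union> C) x"
  proof (cases "p \<in> A")
    case pA: True
    then have pAB: "p \<in> A \<union> B" by blast
    show ?thesis
    proof (cases "q \<in> A")
      case True
      then have "q \<in> A \<union> B" by blast
      from W_ge[OF fAB pAB this, of x] n2 show ?thesis by linarith
    next
      case False
      then have "q \<in> B \<union> C" using pq by blast
      from W_ge[OF fAB pAB bAB, of x] W_ge[OF fBC bBC this, of x] split show ?thesis by linarith
    qed
  next
    case False
    then have pBC: "p \<in> B \<union> C" using pq by blast
    show ?thesis
    proof (cases "q \<in> C")
      case True
      then have "q \<in> B \<union> C" by blast
      from W_ge[OF fBC pBC this, of x] n1 show ?thesis by linarith
    next
      case False
      then have "q \<in> A \<union> B" using pq by blast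
      from W_ge[OF fBC pBC bBC, of x] W_ge[OF fAB bAB this, of x] split show ?thesis by linarith
    qed
  qed
  then show ?thesis using pq(3) by linarith
qed

definition gdens :: "'a::euclidean_space \<Rightarrow> real" where
  "gdens x = (2 * pi) powr (- real DIM('a) / 2) * exp (- (norm x)\<^sup>2 / 2)"

lemma std_gaussian_eq: "std_gaussian = density lborel (\<lambda>x. ennreal (gdens x))"
  by (simp add: std_gaussian_def gdens_def)

lemma sets_std_gaussian[simp, measurable_cong]: "sets std_gaussian = sets borel"
  by (simp add: std_gaussian_def)

lemma space_std_gaussian[simp]: "space std_gaussian = UNIV"
  by (simp add: std_gaussian_def)

lemma gdens_meas[measurable]: "gdens \<in> borel_measurable borel"
  unfolding gdens_def[abs_def] by measurable

lemma gdens_pos: "0 < gdens x"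
  by (simp add: gdens_def)

lemma norm_sq_sum: "(norm (x::'a::euclidean_space))\<^sup>2 = (\<Sum>b\<in>Basis. (x \<bullet> b)\<^sup>2)"
proof -
  have "(norm x)\<^sup>2 = x \<bullet> x" by (rule power2_norm_eq_inner)
  also have "\<dots> = (\<Sum>b\<in>Basis. (x \<bullet> b) * (x \<bullet> b))" by (rule euclidean_inner)
  also have "\<dots> = (\<Sum>b\<in>Basis. (x \<bullet> b)\<^sup>2)" by (simp only: power2_eq_square)
  finally show ?thesis .
qed

lemma gdens_prod: "gdens (x::'a::euclidean_space) = (\<Prod>b\<in>Basis. std_normal_density (x \<bullet> b))"
proof -
  have n2: "(norm x)\<^sup>2 = (\<Sum>b\<in>Basis. (x \<bullet> b)\<^sup>2)"
    by (rule norm_sq_sum)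
  have e: "exp (- (norm x)\<^sup>2 / 2) = (\<Prod>b\<in>Basis. exp (- (x \<bullet> b)\<^sup>2 / 2))"
    unfolding n2 by (simp add: exp_sum[symmetric] sum_negf sum_divide_distrib)
  have c: "(2 * pi) powr (- real DIM('a) / 2) = (1 / sqrt (2 * pi)) ^ DIM('a)"
  proof -
    have "1 / sqrt (2 * pi) = (2 * pi) powr (- 1 / 2)"
      by (simp add: powr_half_sqrt[symmetric] powr_minus_divide)
    then have "(1 / sqrt (2 * pi)) ^ DIM('a) = ((2 * pi) powr (- 1 / 2)) powr real DIM('a)"
      by (simp add: powr_realpow)
    also have "\<dots> = (2 * pi) powr (- real DIM('a) / 2)" by (simp add: powr_powr)
    finally show ?thesis by simp
  qed
  have "(\<Prod>b\<in>Basis. std_normal_density (x \<bullet> b)) = (\<Prod>b\<in>Basis. 1 / sqrt (2 * pi) * exp (- (x \<bullet> b)\<^sup>2 / 2))"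
    unfolding std_normal_density_def by (rule refl)
  also have "\<dots> = (1 / sqrt (2 * pi)) ^ DIM('a) * (\<Prod>b\<in>Basis. exp (- (x \<bullet> b)\<^sup>2 / 2))"
    by (simp only: prod.distrib prod_constant)
  finally show ?thesis
    unfolding gdens_def e c by simp
qed

lemma integrable_coord_sq:
  assumes c: "(c::'a::euclidean_space) \<in> Basis"
  shows "integrable std_gaussian (\<lambda>x. (x \<bullet> c)\<^sup>2)"
proof -
  define F where "F b t = std_normal_density t * t ^ (if b = c then 2 else 0)" for b and t :: real
  have Fnn: "0 \<le> F b t" for b t unfolding F_def by auto
  have Fint: "integrable lborel (F b)" for b unfolding F_def[abs_def]
    by (rule integrable_std_normal_moment)
  have Fmeas[measurable]: "F b \<in> borel_measurable borel" for b unfolding F_def[abs_def] by measurable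
  have eq: "gdens x * (x \<bullet> c)\<^sup>2 = (\<Prod>b\<in>Basis. F b (x \<bullet> b))" for x
  proof -
    have "(\<Prod>b\<in>Basis. (x \<bullet> b) ^ (if b = c then 2 else 0)) = (\<Prod>b\<in>Basis. if b = c then (x \<bullet> b)\<^sup>2 else 1)"
      by (intro prod.cong) auto
    also have "\<dots> = (x \<bullet> c)\<^sup>2" using c by (simp add: prod.delta)
    finally show ?thesis unfolding F_def prod.distrib gdens_prod by simp
  qed
  have "(\<integral>\<^sup>+x. ennreal (norm (gdens x *\<^sub>R (x \<bullet> c)\<^sup>2)) \<partial>lborel)
      = (\<integral>\<^sup>+x. (\<Prod>b\<in>Basis. ennreal (F b (x \<bullet> b))) \<partial>lborel)"
  proof (intro nn_integral_cong)
    fix x :: 'a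
    have "0 \<le> gdens x * (x \<bullet> c)\<^sup>2" using gdens_pos[of x] by simp
    then show "ennreal (norm (gdens x *\<^sub>R (x \<bullet> c)\<^sup>2)) = (\<Prod>b\<in>Basis. ennreal (F b (x \<bullet> b)))"
      by (simp add: eq[symmetric] prod_ennreal Fnn)
  qed
  also have "\<dots> = (\<Prod>b\<in>Basis. (\<integral>\<^sup>+t. ennreal (F b t) \<partial>lborel))"
    by (rule nn_integral_lborel_prod) auto
  also have "\<dots> = (\<Prod>b\<in>Basis. ennreal (\<integral>t. F b t \<partial>lborel))"
    by (intro prod.cong refl nn_integral_eq_integral Fint) (simp add: Fnn)
  also have "\<dots> < \<infinity>"
    by (subst prod_ennreal) (auto intro: integral_nonneg_AE simp: Fnn)
  finally have "integrable lborel (\<lambda>x. gdens x *\<^sub>R (x \<bullet> c)\<^sup>2)"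
    by (intro integrableI_bounded) auto
  then show ?thesis unfolding std_gaussian_eq
    by (subst integrable_density) (auto simp: less_imp_le gdens_pos)
qed

lemma integrable_norm_sq: "integrable std_gaussian (\<lambda>x::'a::euclidean_space. (norm x)\<^sup>2)"
proof -
  have "integrable std_gaussian (\<lambda>x::'a. \<Sum>b\<in>Basis. (x \<bullet> b)\<^sup>2)"
    by (rule Bochner_Integration.integrable_sum) (erule integrable_coord_sq)
  moreover have "(\<Sum>b\<in>Basis. (x \<bullet> b)\<^sup>2) = (norm x)\<^sup>2" for x :: 'a
    by (rule norm_sq_sum[symmetric])
  ultimately show ?thesis by simp
qed

definition DD :: "'a::euclidean_space set \<Rightarrow> real" where
  "DD A = (\<Sum>y\<in>mdiff A A. norm y)"

lemma W_abs_le: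
  assumes "finite A" "A \<noteq> {}"
  shows "\<bar>W A x\<bar> \<le> DD A * norm x"
proof -
  obtain a b where ab: "a \<in> A" "b \<in> A" "W A x = (a - b) \<bullet> x"
    using W_attained[OF assms] by blast
  have m: "a - b \<in> mdiff A A" using ab unfolding mdiff_def by auto
  have n1: "norm (a - b) \<le> DD A" unfolding DD_def
    by (rule member_le_sum[OF m]) (simp_all add: finite_mdiff[OF assms(1)])
  have n2: "(a - b) \<bullet> x \<le> norm (a - b) * norm x" by (rule norm_cauchy_schwarz)
  have n3: "norm (a - b) * norm x \<le> DD A * norm x"
    using n1 by (rule mult_right_mono) simp
  have n4: "0 \<le> W A x" by (rule W_nonneg[OF assms])
  show ?thesis using n2 n3 n4 ab(3) by linarith
qed


lemma DD_nonneg: "0 \<le> DD A" unfolding DD_def by (simp add: sum_nonneg)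

lemma W_meas_sg: "finite A \<Longrightarrow> W A \<in> borel_measurable std_gaussian"
  by (subst measurable_cong_sets[OF sets_std_gaussian refl]) (rule W_meas)

lemma integrable_WW:
  assumes "finite A" "A \<noteq> {}" "finite B" "B \<noteq> {}"
  shows "integrable std_gaussian (\<lambda>x. W A x * W B x)"
proof (rule Bochner_Integration.integrable_bound)
  show "integrable std_gaussian (\<lambda>x. DD A * DD B * (norm x)\<^sup>2)"
    by (intro integrable_mult_right integrable_norm_sq)
  show "(\<lambda>x. W A x * W B x) \<in> borel_measurable std_gaussian"
    using W_meas_sg[OF assms(1)] W_meas_sg[OF assms(3)] by (rule borel_measurable_times)
  show "AE x in std_gaussian. norm (W A x * W B x) \<le> norm (DD A * DD B * (norm x)\<^sup>2)"
  proof (rule AE_I2)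
    fix x
    have "\<bar>W A x\<bar> * \<bar>W B x\<bar> \<le> (DD A * norm x) * (DD B * norm x)"
      using W_abs_le[OF assms(1,2), of x] W_abs_le[OF assms(3,4), of x] DD_nonneg[of A]
      by (intro mult_mono) auto
    moreover have "(DD A * norm x) * (DD B * norm x) = DD A * DD B * (norm x)\<^sup>2"
      by (simp only: power2_eq_square mult_ac)
    moreover have "norm (DD A * DD B * (norm x)\<^sup>2) = DD A * DD B * (norm x)\<^sup>2"
      using DD_nonneg[of A] DD_nonneg[of B] by simp
    moreover have "norm (W A x * W B x) = \<bar>W A x\<bar> * \<bar>W B x\<bar>"
      by (simp add: abs_mult)
    ultimately show "norm (W A x * W B x) \<le> norm (DD A * DD B * (norm x)\<^sup>2)" by simp
  qed
qed

lemma real_cs_aux: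
  fixes a b c :: real
  assumes "0 \<le> a" "0 \<le> b" "\<And>t. t > 0 \<Longrightarrow> 2 * c \<le> t * a + b / t"
  shows "c \<le> sqrt a * sqrt b"
proof (cases "a > 0 \<and> b > 0")
  case True
  define t where "t = sqrt b / sqrt a"
  have tp: "t > 0" using True by (simp add: t_def)
  define sa where "sa = sqrt a"
  define sb where "sb = sqrt b"
  have sa: "sa > 0" "a = sa * sa" using True by (auto simp: sa_def)
  have sb: "sb > 0" "b = sb * sb" using True by (auto simp: sb_def)
  have "t * a = sqrt a * sqrt b" unfolding t_def sa_def[symmetric] sb_def[symmetric]
    using sa sb by (simp add: field_simps)
  moreover have "b / t = sqrt a * sqrt b" unfolding t_def sa_def[symmetric] sb_def[symmetric]
    using sa sb by (simp add: field_simps)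
  ultimately show ?thesis using assms(3)[OF tp] by simp
next
  case False
  show ?thesis
  proof (rule ccontr)
    assume "\<not> c \<le> sqrt a * sqrt b"
    then have cp: "c > 0" using False assms by auto
    show False
    proof (cases "a = 0")
      case True
      then show False
      proof (cases "b = 0")
        case True
        then show False using assms(3)[of 1] \<open>a = 0\<close> cp by simp
      next
        case False
        then have "b > 0" using assms by simp
        then have "2 * c \<le> 0 * a + b / (b / c)" using assms(3)[of "b / c"] cp \<open>a = 0\<close> by simp
        then show False using cp \<open>b > 0\<close> \<open>a = 0\<close> by simp
      qed
    next
      case False
      then have "a > 0" "b = 0" using assms \<open>\<not> (a > 0 \<and> b > 0)\<close> by auto
      then have "2 * c \<le> (c / a) * a + 0" using assms(3)[of "c / a"] cp by simp
      then show False using cp \<open>a > 0\<close> by simp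
    qed
  qed
qed

lemma minkowski_aux:
  fixes f g :: "'b \<Rightarrow> real"
  assumes [measurable]: "f \<in> borel_measurable M" "g \<in> borel_measurable M"
  assumes i1: "integrable M (\<lambda>x. f x * f x)" and i2: "integrable M (\<lambda>x. g x * g x)"
    and i3: "integrable M (\<lambda>x. f x * g x)"
  shows "(\<integral>x. (f x + g x)\<^sup>2 \<partial>M) \<le> (sqrt (\<integral>x. (f x)\<^sup>2 \<partial>M) + sqrt (\<integral>x. (g x)\<^sup>2 \<partial>M))\<^sup>2"
proof -
  define a where "a = (\<integral>x. f x * f x \<partial>M)"
  define b where "b = (\<integral>x. g x * g x \<partial>M)"
  define c where "c = (\<integral>x. f x * g x \<partial>M)"
  have a0: "0 \<le> a" unfolding a_def by (intro integral_nonneg_AE) auto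
  have b0: "0 \<le> b" unfolding b_def by (intro integral_nonneg_AE) auto
  have "2 * c \<le> t * a + b / t" if tp: "t > 0" for t
  proof -
    have "(\<integral>x. 2 * (f x * g x) \<partial>M) \<le> (\<integral>x. t * (f x * f x) + (g x * g x) / t \<partial>M)"
    proof (rule integral_mono)
      show "integrable M (\<lambda>x. 2 * (f x * g x))" using i3 by simp
      show "integrable M (\<lambda>x. t * (f x * f x) + (g x * g x) / t)" using i1 i2 by simp
      fix x
      have "0 \<le> (t * f x - g x)\<^sup>2 / t" using tp by simp
      also have "(t * f x - g x)\<^sup>2 / t = t * (f x * f x) + (g x * g x) / t - 2 * (f x * g x)"
        using tp by (simp add: power2_eq_square field_simps)
      finally show "2 * (f x * g x) \<le> t * (f x * f x) + (g x * g x) / t" by simp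
    qed
    also have "\<dots> = t * a + b / t" unfolding a_def b_def using i1 i2 by simp
    finally show ?thesis unfolding c_def by simp
  qed
  then have cle: "c \<le> sqrt a * sqrt b" using a0 b0 by (rule real_cs_aux[rotated 2])
  have "(\<integral>x. (f x + g x)\<^sup>2 \<partial>M) = (\<integral>x. f x * f x + 2 * (f x * g x) + g x * g x \<partial>M)"
    by (simp add: power2_eq_square algebra_simps)
  also have "\<dots> = a + 2 * c + b" unfolding a_def b_def c_def using i1 i2 i3 by simp
  also have "\<dots> \<le> a + 2 * (sqrt a * sqrt b) + b" using cle by simp
  also have "\<dots> = (sqrt a + sqrt b)\<^sup>2" using a0 b0 by (simp add: power2_eq_square algebra_simps)
  finally show ?thesis unfolding a_def b_def by (simp add: power2_eq_square)
qed


lemma integrable_Wsq: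
  assumes "finite A" "A \<noteq> {}"
  shows "integrable std_gaussian (\<lambda>x. (W A x)\<^sup>2)"
  using integrable_WW[OF assms assms] by (simp add: power2_eq_square)

lemma Wsq_int_nonneg: "0 \<le> (\<integral>x. (W A x)\<^sup>2 \<partial>std_gaussian)"
  by (rule integral_nonneg_AE) simp

lemma delta_nonneg: "finite A \<Longrightarrow> 0 \<le> gauss_delta A"
proof (cases "A = {}")
  case True
  then show ?thesis by (simp add: gauss_delta_def)
next
  case False
  assume "finite A"
  then show ?thesis using gauss_delta_eq[OF \<open>finite A\<close> False] Wsq_int_nonneg[of A] by simp
qed

lemma integrable_lin_sq: "integrable std_gaussian (\<lambda>x. (v \<bullet> x)\<^sup>2)"
proof (rule Bochner_Integration.integrable_bound)
  show "integrable std_gaussian (\<lambda>x. (norm v)\<^sup>2 * (norm x)\<^sup>2)"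
    by (intro integrable_mult_right integrable_norm_sq)
  show "(\<lambda>x. (v \<bullet> x)\<^sup>2) \<in> borel_measurable std_gaussian"
    by (subst measurable_cong_sets[OF sets_std_gaussian refl]) measurable
  show "AE x in std_gaussian. norm ((v \<bullet> x)\<^sup>2) \<le> norm ((norm v)\<^sup>2 * (norm x)\<^sup>2)"
  proof (rule AE_I2)
    fix x
    have "\<bar>v \<bullet> x\<bar> \<le> norm v * norm x" by (rule Cauchy_Schwarz_ineq2)
    then have "\<bar>v \<bullet> x\<bar>\<^sup>2 \<le> (norm v * norm x)\<^sup>2" by (rule power_mono) simp
    then show "norm ((v \<bullet> x)\<^sup>2) \<le> norm ((norm v)\<^sup>2 * (norm x)\<^sup>2)"
      by (simp add: power_mult_distrib)
  qed
qed

lemma lin_sq_pos: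
  assumes "v \<noteq> 0"
  shows "0 < (\<integral>x. (v \<bullet> x)\<^sup>2 \<partial>std_gaussian)"
proof (rule ccontr)
  assume "\<not> ?thesis"
  moreover have "0 \<le> (\<integral>x. (v \<bullet> x)\<^sup>2 \<partial>std_gaussian)" by (rule integral_nonneg_AE) simp
  ultimately have "(\<integral>x. (v \<bullet> x)\<^sup>2 \<partial>std_gaussian) = 0" by simp
  then have "AE x in std_gaussian. v \<bullet> x = 0"
    using integral_nonneg_eq_0_iff_AE[OF integrable_lin_sq[of v]] by simp
  then have "AE x in lborel. 0 < ennreal (gdens x) \<longrightarrow> v \<bullet> x = 0"
    unfolding std_gaussian_eq by (subst (asm) AE_density) simp_all
  then have ae: "AE x in lborel. v \<bullet> x = 0"
    by (rule AE_mp) (intro AE_I2, simp add: gdens_pos)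
  have meas: "{x \<in> space lborel. \<not> v \<bullet> x = 0} \<in> sets lborel" by measurable
  have "{x \<in> space lborel. \<not> v \<bullet> x = 0} \<in> null_sets lborel"
    using ae AE_iff_null[OF meas] by simp
  then have "{x. v \<bullet> x \<noteq> 0} \<in> null_sets lebesgue"
    by (intro null_sets_completionI) simp
  then have neg: "negligible {x. v \<bullet> x \<noteq> 0}" by (simp add: negligible_iff_null_sets)
  have "open {x. v \<bullet> x \<noteq> 0}" by (intro open_Collect_neq continuous_intros)
  moreover have "v \<in> {x. v \<bullet> x \<noteq> 0}" using assms by simp
  ultimately show False using open_not_negligible neg by blast
qed

lemma Wsq_pos:
  assumes "finite A" "a \<in> A" "b \<in> A" "a \<noteq> b"
  shows "0 < (\<integral>x. (W A x)\<^sup>2 \<partial>std_gaussian)"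
proof -
  have ne: "A \<noteq> {}" using assms by auto
  have "(\<integral>x. ((a - b) \<bullet> x)\<^sup>2 \<partial>std_gaussian) \<le> (\<integral>x. (W A x)\<^sup>2 \<partial>std_gaussian)"
  proof (rule integral_mono)
    show "integrable std_gaussian (\<lambda>x. ((a - b) \<bullet> x)\<^sup>2)" by (rule integrable_lin_sq)
    show "integrable std_gaussian (\<lambda>x. (W A x)\<^sup>2)" by (rule integrable_Wsq[OF assms(1) ne])
    fix x
    have "(a - b) \<bullet> x \<le> W A x" by (rule W_ge[OF assms(1-3)])
    moreover have "(b - a) \<bullet> x \<le> W A x" by (rule W_ge[OF assms(1) assms(3) assms(2)])
    moreover have "(b - a) \<bullet> x = - ((a - b) \<bullet> x)" by (simp add: inner_diff_left)
    ultimately have "\<bar>(a - b) \<bullet> x\<bar> \<le> W A x" by linarith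
    then have "\<bar>(a - b) \<bullet> x\<bar>\<^sup>2 \<le> (W A x)\<^sup>2" by (rule power_mono) simp
    then show "((a - b) \<bullet> x)\<^sup>2 \<le> (W A x)\<^sup>2" by simp
  qed
  moreover have "0 < (\<integral>x. ((a - b) \<bullet> x)\<^sup>2 \<partial>std_gaussian)"
    by (rule lin_sq_pos) (use assms in simp)
  ultimately show ?thesis by linarith
qed

lemma W_single: "W {a} x = 0"
  unfolding W_def mdiff_def by simp

theorem proposition7:
  shows "is_diversity (UNIV :: 'a::euclidean_space set) gauss_delta"
  unfolding is_diversity_def
proof (intro conjI allI impI)
  fix A :: "'a set"
  assume "finite A \<and> A \<subseteq> UNIV"
  then have fA: "finite A" by simp
  show "0 \<le> gauss_delta A" by (rule delta_nonneg[OF fA])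
  show "gauss_delta A = 0 \<longleftrightarrow> card A \<le> 1"
  proof (cases "A = {}")
    case True
    then show ?thesis by (simp add: gauss_delta_def)
  next
    case ne: False
    show ?thesis
    proof (cases "card A \<le> 1")
      case True
      then have "\<forall>a1\<in>A. \<forall>a2\<in>A. a1 = a2" using card_le_Suc0_iff_eq[OF fA] by simp
      then obtain a where "A = {a}" using ne by blast
      then have "W A x = 0" for x using W_single by simp
      then show ?thesis using True gauss_delta_eq[OF fA ne] by simp
    next
      case False
      then have "\<not> (\<forall>a1\<in>A. \<forall>a2\<in>A. a1 = a2)" using card_le_Suc0_iff_eq[OF fA] by simp
      then obtain a b where ab: "a \<in> A" "b \<in> A" "a \<noteq> b" by blast
      have "0 < sqrt (\<integral>x. (W A x)\<^sup>2 \<partial>std_gaussian)"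
        using Wsq_pos[OF fA ab] by simp
      then show ?thesis using False gauss_delta_eq[OF fA ne] by simp
    qed
  qed
next
  fix A B C :: "'a set"
  assume H: "finite A \<and> finite B \<and> finite C \<and> A \<subseteq> UNIV \<and> B \<subseteq> UNIV \<and> C \<subseteq> UNIV \<and> B \<noteq> {}"
  then have fA: "finite A" and fB: "finite B" and fC: "finite C" and neB: "B \<noteq> {}" by auto
  have fAB: "finite (A \<union> B)" and fBC: "finite (B \<union> C)" and fAC: "finite (A \<union> C)"
    using fA fB fC by auto
  have neAB: "A \<union> B \<noteq> {}" and neBC: "B \<union> C \<noteq> {}" using neB by auto
  show "gauss_delta (A \<union> C) \<le> gauss_delta (A \<union> B) + gauss_delta (B \<union> C)"
  proof (cases "A \<union> C = {}")
    case True
    then show ?thesis using delta_nonneg[OF fAB] delta_nonneg[OF fBC] by (simp add: gauss_delta_def)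
  next
    case neAC: False
    define f where "f = W (A \<union> B)"
    define g where "g = W (B \<union> C)"
    define h where "h = W (A \<union> C)"
    have fm: "f \<in> borel_measurable std_gaussian" unfolding f_def by (rule W_meas_sg[OF fAB])
    have gm: "g \<in> borel_measurable std_gaussian" unfolding g_def by (rule W_meas_sg[OF fBC])
    have iff: "integrable std_gaussian (\<lambda>x. f x * f x)" unfolding f_def by (rule integrable_WW[OF fAB neAB fAB neAB])
    have igg: "integrable std_gaussian (\<lambda>x. g x * g x)" unfolding g_def by (rule integrable_WW[OF fBC neBC fBC neBC])
    have ifg: "integrable std_gaussian (\<lambda>x. f x * g x)" unfolding f_def g_def by (rule integrable_WW[OF fAB neAB fBC neBC])
    have ihh: "integrable std_gaussian (\<lambda>x. (h x)\<^sup>2)" unfolding h_def by (rule integrable_Wsq[OF fAC neAC])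
    have "integrable std_gaussian (\<lambda>x. f x * f x + 2 * (f x * g x) + g x * g x)"
      using iff igg ifg by simp
    moreover have "(\<lambda>x. f x * f x + 2 * (f x * g x) + g x * g x) = (\<lambda>x. (f x + g x)\<^sup>2)"
      by (rule ext) (simp add: power2_eq_square algebra_simps)
    ultimately have ifg2: "integrable std_gaussian (\<lambda>x. (f x + g x)\<^sup>2)" by simp
    have "(\<integral>x. (h x)\<^sup>2 \<partial>std_gaussian) \<le> (\<integral>x. (f x + g x)\<^sup>2 \<partial>std_gaussian)"
    proof (rule integral_mono[OF ihh ifg2])
      fix x
      have "h x \<le> f x + g x" unfolding f_def g_def h_def by (rule W_tri[OF fA fB fC neB neAC])
      moreover have "0 \<le> h x" unfolding h_def by (rule W_nonneg[OF fAC neAC])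
      ultimately show "(h x)\<^sup>2 \<le> (f x + g x)\<^sup>2" by (intro power_mono) auto
    qed
    also have "\<dots> \<le> (sqrt (\<integral>x. (f x)\<^sup>2 \<partial>std_gaussian) + sqrt (\<integral>x. (g x)\<^sup>2 \<partial>std_gaussian))\<^sup>2"
      by (rule minkowski_aux[OF fm gm iff igg ifg])
    finally have le: "(\<integral>x. (h x)\<^sup>2 \<partial>std_gaussian) \<le> (gauss_delta (A \<union> B) + gauss_delta (B \<union> C))\<^sup>2"
      unfolding gauss_delta_eq[OF fAB neAB] gauss_delta_eq[OF fBC neBC] f_def g_def .
    have "gauss_delta (A \<union> C) = sqrt (\<integral>x. (h x)\<^sup>2 \<partial>std_gaussian)"
      unfolding h_def by (rule gauss_delta_eq[OF fAC neAC])
    also have "\<dots> \<le> sqrt ((gauss_delta (A \<union> B) + gauss_delta (B \<union> C))\<^sup>2)"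
      using le by (rule real_sqrt_le_mono)
    also have "\<dots> = gauss_delta (A \<union> B) + gauss_delta (B \<union> C)"
      using delta_nonneg[OF fAB] delta_nonneg[OF fBC] by simp
    finally show ?thesis .
  qed
qed

end
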